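(* Let $S$ be a characteristic subset of $\mathbb{R}_{\ge0}$, let $X$ be an $\mathbb{R}_{\ge0}$-ultrametrizable topological space, and let $A$ be a closed subset of $X$. Then there exists a map $\Upsilon\colon\mathrm{Ult}(A;S)\to\mathrm{Ult}(X;S)$ such that: (B1) $\Upsilon$ is an isometric embedding: $\mathcal{UD}_X^S(\Upsilon(d_1),\Upsilon(d_2))=\mathcal{UD}_A^S(d_1,d_2)$ for all $d_1,d_2\in\mathrm{Ult}(A;S)$; (B2) $\Upsilon(d)|_{A\times A}=d$ for all $d\in\mathrm{Ult}(A;S)$; (B3) if $d_1,d_2\in\mathrm{Ult}(A;S)$ satisfy $d_1(a,b)\le d_2(a,b)$ for all $a,b\in A$, then $\Upsilon(d_1)(x,y)\le\Upsilon(d_2)(x,y)$ for all $x,y\in X$; (B4) $\Upsilon(d\lor e)=\Upsilon(d)\lor\Upsilon(e)$ for all $d,e\in\mathrm{Ult}(A;S)$. Moreover, if $X$ is completely metrizable, then $\Upsilon$ can be chosen to satisfy (B1)–(B4) and also (B5) if $d\in\mathrm{Ult}(A;S)$ is complete, then so is $\Upsilon(d)$.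
   Context: A subset $S\subseteq\mathbb{R}_{\ge0}$ is characteristic if $0\in S$ and for every $s>0$ there is $t\in S\setminus\{0\}$ with $t\le s$. For $S\subseteq\mathbb{R}_{\ge 0}$ with $0\in S$, an $S$-ultrametric on a set $Y$ is a map $d\colon Y\times Y\to S$ with $d(x,y)=0\iff x=y$, $d(x,y)=d(y,x)$ and $d(x,y)\le\max\{d(x,z),d(z,y)\}$. For a topological space $Y$, $\mathrm{Ult}(Y;S)$ is the set of $S$-ultrametrics on $Y$ generating the topology of $Y$ (via open balls); $Y$ is $\mathbb{R}_{\ge0}$-ultrametrizable if $\mathrm{Ult}(Y;\mathbb{R}_{\ge0})\ne\emptyset$. $(d\lor e)(x,y)=\max\{d(x,y),e(x,y)\}$. $\mathcal{UD}_Y^S(d,e)$ is the infimum of all $\epsilon\in S\sqcup\{\infty\}$ such that $d(x,y)\le\max\{e(x,y),\epsilon\}$ and $e(x,y)\le\max\{d(x,y),\epsilon\}$ for all $x,y\in Y$. A metric is complete if every Cauchy filter converges (equivalently, every Cauchy sequence converges). $A$ carries the subspace topology. *)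

theory Defs
  imports "HOL-Analysis.Analysis"
begin

type_synonym 'a dfun = "'a \<Rightarrow> 'a \<Rightarrow> real"

definition characteristic :: "real set \<Rightarrow> bool" where
  "characteristic S \<longleftrightarrow> S \<subseteq> {0..} \<and> 0 \<in> S \<and>
     (\<forall>s>0. \<exists>t\<in>S - {0}. t \<le> s)"

text \<open>An S-ultrametric on the set Y. A map Y x Y -> S is represented by a
  function that is extensional, i.e. takes the value 0 outside Y x Y.\<close>
definition S_ultrametric :: "real set \<Rightarrow> 'a set \<Rightarrow> 'a dfun \<Rightarrow> bool" where
  "S_ultrametric S Y d \<longleftrightarrow>
     (\<forall>x y. (x \<notin> Y \<or> y \<notin> Y) \<longrightarrow> d x y = 0) \<and>
     (\<forall>x\<in>Y. \<forall>y\<in>Y. d x y \<in> S) \<and>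
     (\<forall>x\<in>Y. \<forall>y\<in>Y. d x y = 0 \<longleftrightarrow> x = y) \<and>
     (\<forall>x\<in>Y. \<forall>y\<in>Y. d x y = d y x) \<and>
     (\<forall>x\<in>Y. \<forall>y\<in>Y. \<forall>z\<in>Y. d x y \<le> max (d x z) (d z y))"

definition generates_topology :: "'a topology \<Rightarrow> 'a dfun \<Rightarrow> bool" where
  "generates_topology T d \<longleftrightarrow>
     (\<forall>U. openin T U \<longleftrightarrow> U \<subseteq> topspace T \<and>
        (\<forall>x\<in>U. \<exists>r>0. {y \<in> topspace T. d x y < r} \<subseteq> U))"

definition Ult :: "'a topology \<Rightarrow> real set \<Rightarrow> 'a dfun set" where
  "Ult T S = {d. S_ultrametric S (topspace T) d \<and> generates_topology T d}"

definition ultrametrizable :: "'a topology \<Rightarrow> bool" where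
  "ultrametrizable T \<longleftrightarrow> Ult T {0..} \<noteq> {}"

definition dmax :: "'a dfun \<Rightarrow> 'a dfun \<Rightarrow> 'a dfun" where
  "dmax d e = (\<lambda>x y. max (d x y) (e x y))"

definition UD :: "real set \<Rightarrow> 'a set \<Rightarrow> 'a dfun \<Rightarrow> 'a dfun \<Rightarrow> ereal" where
  "UD S Y d e = Inf {\<epsilon> :: ereal. (\<epsilon> = \<infinity> \<or> (\<exists>s\<in>S. \<epsilon> = ereal s)) \<and>
      (\<forall>x\<in>Y. \<forall>y\<in>Y. ereal (d x y) \<le> max (ereal (e x y)) \<epsilon> \<and>
                      ereal (e x y) \<le> max (ereal (d x y)) \<epsilon>)}"

definition complete_on :: "'a set \<Rightarrow> 'a dfun \<Rightarrow> bool" where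
  "complete_on Y d \<longleftrightarrow>
     (\<forall>f :: nat \<Rightarrow> 'a. range f \<subseteq> Y \<longrightarrow>
        (\<forall>\<epsilon>>0. \<exists>N. \<forall>m\<ge>N. \<forall>n\<ge>N. d (f m) (f n) < \<epsilon>) \<longrightarrow>
        (\<exists>l\<in>Y. \<forall>\<epsilon>>0. \<exists>N. \<forall>n\<ge>N. d (f n) l < \<epsilon>))"

end

theory Submission
  imports Defs
begin


lemma ult_facts:
  assumes "S_ultrametric S Y d"
  shows "\<And>x y. (x \<notin> Y \<or> y \<notin> Y) \<Longrightarrow> d x y = 0"
    and "\<And>x y. x \<in> Y \<Longrightarrow> y \<in> Y \<Longrightarrow> d x y \<in> S"
    and "\<And>x y. x \<in> Y \<Longrightarrow> y \<in> Y \<Longrightarrow> d x y = 0 \<longleftrightarrow> x = y"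
    and "\<And>x y. d x y = d y x"
    and "\<And>x y z. x \<in> Y \<Longrightarrow> y \<in> Y \<Longrightarrow> z \<in> Y \<Longrightarrow> d x y \<le> max (d x z) (d z y)"
    and "\<And>x. d x x = 0"
  using assms unfolding S_ultrametric_def by metis+

lemma ult_nonneg:
  assumes "S_ultrametric S Y d" "S \<subseteq> {0..}"
  shows "0 \<le> d x y"
proof (cases "x \<in> Y \<and> y \<in> Y")
  case True then show ?thesis using ult_facts(2)[OF assms(1)] assms(2) by fastforce
next
  case False then show ?thesis using ult_facts(1)[OF assms(1)] by auto
qed

lemma gen_ball:
  assumes "generates_topology T d" "openin T U" "x \<in> U"
  shows "\<exists>r>0. {y \<in> topspace T. d x y < r} \<subseteq> U"
  using assms unfolding generates_topology_def by blast

lemma ball_open: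
  assumes "S_ultrametric S (topspace T) d" "generates_topology T d" "x \<in> topspace T" "e > 0"
  shows "openin T {y \<in> topspace T. d x y < e}"
proof -
  have "\<forall>y\<in>{y \<in> topspace T. d x y < e}. \<exists>r>0. {z \<in> topspace T. d y z < r} \<subseteq> {y \<in> topspace T. d x y < e}"
  proof
    fix y assume y: "y \<in> {y \<in> topspace T. d x y < e}"
    have "{z \<in> topspace T. d y z < e} \<subseteq> {y \<in> topspace T. d x y < e}"
    proof
      fix z assume z: "z \<in> {z \<in> topspace T. d y z < e}"
      have "d x z \<le> max (d x y) (d y z)" using ult_facts(5)[OF assms(1)] y z assms(3) by blast
      then show "z \<in> {y \<in> topspace T. d x y < e}" using y z by auto
    qed
    then show "\<exists>r>0. {z \<in> topspace T. d y z < r} \<subseteq> {y \<in> topspace T. d x y < e}" using assms(4) by blast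
  qed
  then show ?thesis using assms(2) unfolding generates_topology_def by blast
qed

lemma gen_transfer:
  assumes "generates_topology T d1"
    and "\<And>x e. x \<in> topspace T \<Longrightarrow> e > 0 \<Longrightarrow> \<exists>\<eta>>0. \<forall>y\<in>topspace T. d2 x y < \<eta> \<longrightarrow> d1 x y < e"
    and "\<And>x e. x \<in> topspace T \<Longrightarrow> e > 0 \<Longrightarrow> \<exists>\<eta>>0. \<forall>y\<in>topspace T. d1 x y < \<eta> \<longrightarrow> d2 x y < e"
  shows "generates_topology T d2"
  unfolding generates_topology_def
proof (intro allI iffI)
  fix U assume U: "openin T U"
  show "U \<subseteq> topspace T \<and> (\<forall>x\<in>U. \<exists>r>0. {y \<in> topspace T. d2 x y < r} \<subseteq> U)"
  proof (intro conjI ballI)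
    show "U \<subseteq> topspace T" using U openin_subset by blast
  next
    fix x assume x: "x \<in> U"
    then have xT: "x \<in> topspace T" using U openin_subset by blast
    obtain r where r: "r > 0" "{y \<in> topspace T. d1 x y < r} \<subseteq> U" using gen_ball[OF assms(1) U x] by blast
    obtain \<eta> where "\<eta> > 0" "\<forall>y\<in>topspace T. d2 x y < \<eta> \<longrightarrow> d1 x y < r" using assms(2)[OF xT r(1)] by blast
    then show "\<exists>r>0. {y \<in> topspace T. d2 x y < r} \<subseteq> U" using r by blast
  qed
next
  fix U assume U: "U \<subseteq> topspace T \<and> (\<forall>x\<in>U. \<exists>r>0. {y \<in> topspace T. d2 x y < r} \<subseteq> U)"
  have "\<forall>x\<in>U. \<exists>r>0. {y \<in> topspace T. d1 x y < r} \<subseteq> U"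
  proof
    fix x assume x: "x \<in> U"
    then have xT: "x \<in> topspace T" using U by blast
    obtain r where r: "r > 0" "{y \<in> topspace T. d2 x y < r} \<subseteq> U" using U x by blast
    obtain \<eta> where "\<eta> > 0" "\<forall>y\<in>topspace T. d1 x y < \<eta> \<longrightarrow> d2 x y < r" using assms(3)[OF xT r(1)] by blast
    then show "\<exists>r>0. {y \<in> topspace T. d1 x y < r} \<subseteq> U" using r by blast
  qed
  then show "openin T U" using assms(1) U unfolding generates_topology_def by blast
qed

lemma small_pow: "(0::real) < e \<Longrightarrow> \<exists>n. (1/2::real)^n < e"
  using real_arch_pow_inv[of e "1/2"] by auto

definition pick :: "real set \<Rightarrow> real \<Rightarrow> real" where
  "pick S s = (SOME t. t \<in> S \<and> 0 < t \<and> t \<le> s)"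

primrec sq :: "real set \<Rightarrow> nat \<Rightarrow> real" where
  "sq S 0 = pick S 1"
| "sq S (Suc n) = pick S (min (sq S n) ((1/2)^Suc n))"

definition ff :: "real set \<Rightarrow> real \<Rightarrow> real" where
  "ff S t = (if t \<le> 0 then 0 else sq S (LEAST n. (1/2::real)^n \<le> t))"

lemma pick_prop:
  assumes "characteristic S" "s > 0"
  shows "pick S s \<in> S \<and> 0 < pick S s \<and> pick S s \<le> s"
proof -
  obtain t where t: "t \<in> S - {0}" "t \<le> s" using assms unfolding characteristic_def by blast
  then have "t \<ge> 0" using assms(1) unfolding characteristic_def by auto
  then have "t \<in> S \<and> 0 < t \<and> t \<le> s" using t by auto
  then show ?thesis unfolding pick_def by (rule someI)
qed

lemma sq_prop:
  assumes "characteristic S"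
  shows "sq S n \<in> S \<and> 0 < sq S n \<and> sq S n \<le> (1/2)^n"
proof (induction n)
  case 0 then show ?case using pick_prop[OF assms, of 1] by simp
next
  case (Suc n)
  have "0 < min (sq S n) ((1/2)^Suc n)" using Suc by simp
  from pick_prop[OF assms this] show ?case by simp
qed

lemma sq_anti:
  assumes "characteristic S" "m \<le> n"
  shows "sq S n \<le> sq S m"
proof (rule lift_Suc_antimono_le[of "sq S"])
  fix n
  have "0 < min (sq S n) ((1/2)^Suc n)" using sq_prop[OF assms(1)] by simp
  from pick_prop[OF assms(1) this] show "sq S (Suc n) \<le> sq S n" by simp
qed (fact assms(2))

lemma ff_props:
  assumes "characteristic S"
  shows "ff S 0 = 0"
    and "\<And>t. t > 0 \<Longrightarrow> ff S t > 0"
    and "\<And>t. t \<ge> 0 \<Longrightarrow> ff S t \<in> S"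
    and "\<And>t. t \<ge> 0 \<Longrightarrow> ff S t \<le> t"
    and "\<And>s t. s \<le> t \<Longrightarrow> ff S s \<le> ff S t"
    and "\<And>t. 0 \<le> ff S t"
proof -
  have S0: "0 \<in> S" using assms unfolding characteristic_def by auto
  have ex: "\<exists>n. (1/2::real)^n \<le> t" if "t > 0" for t
    using small_pow[OF that] less_imp_le by blast
  show "ff S 0 = 0" unfolding ff_def by simp
  show pos: "ff S t > 0" if "t > 0" for t using that sq_prop[OF assms] unfolding ff_def by auto
  show "ff S t \<in> S" if "t \<ge> 0" for t using that sq_prop[OF assms] S0 unfolding ff_def by auto
  show "ff S t \<le> t" if "t \<ge> 0" for t
  proof (cases "t = 0")
    case False
    then have t: "t > 0" using that by simp
    have "(1/2::real)^(LEAST n. (1/2::real)^n \<le> t) \<le> t" using LeastI_ex[OF ex[OF t]] .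
    then show ?thesis using t sq_prop[OF assms, of "LEAST n. (1/2::real)^n \<le> t"]
      unfolding ff_def by auto
  qed (simp add: ff_def)
  show nn: "0 \<le> ff S t" for t using sq_prop[OF assms] unfolding ff_def by (auto simp: less_imp_le)
  show "ff S s \<le> ff S t" if st: "s \<le> t" for s t
  proof (cases "s \<le> 0")
    case True then show ?thesis using nn[of t] by (simp add: ff_def)
  next
    case False
    then have s: "s > 0" and t: "t > 0" using st by auto
    have "(1/2::real)^(LEAST n. (1/2::real)^n \<le> s) \<le> t" using LeastI_ex[OF ex[OF s]] st by linarith
    then have "(LEAST n. (1/2::real)^n \<le> t) \<le> (LEAST n. (1/2::real)^n \<le> s)" by (rule Least_le)
    then show ?thesis using s t sq_anti[OF assms] unfolding ff_def by auto
  qed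
qed




locale ext_setup =
  fixes X :: "'a topology" and A :: "'a set" and w :: "'a dfun" and S :: "real set"
  assumes charS: "characteristic S"
    and wU: "S_ultrametric {0..} (topspace X) w"
    and wG: "generates_topology X w"
    and Acl: "closedin X A"
begin

lemma S0: "0 \<in> S" and Snn: "S \<subseteq> {0..}" using charS unfolding characteristic_def by auto

lemma A_sub: "A \<subseteq> topspace X" using Acl closedin_subset by blast

lemma w_nn: "0 \<le> w x y" using ult_nonneg[OF wU] by simp
lemma w_refl: "w x x = 0" using ult_facts(6)[OF wU] .
lemma w_sym: "w x y = w y x" using ult_facts(4)[OF wU] .
lemma w_ultra: "x \<in> topspace X \<Longrightarrow> y \<in> topspace X \<Longrightarrow> z \<in> topspace X \<Longrightarrow> w x y \<le> max (w x z) (w z y)"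
  using ult_facts(5)[OF wU] .
lemma w_pos: "x \<in> topspace X \<Longrightarrow> y \<in> topspace X \<Longrightarrow> x \<noteq> y \<Longrightarrow> 0 < w x y"
  using ult_facts(3)[OF wU] w_nn by (metis order_le_less)

definition dA :: "'a \<Rightarrow> real" where
  "dA x = (if A = {} then 1 else Inf ((\<lambda>a. w x a) ` A))"

lemma bdd: "bdd_below ((\<lambda>a. w x a) ` A)"
  by (rule bdd_belowI[where m=0]) (auto simp: w_nn)

lemma dA_le: "a \<in> A \<Longrightarrow> dA x \<le> w x a"
  unfolding dA_def using bdd by (auto intro: cInf_lower)

lemma dA_nn: "0 \<le> dA x"
  unfolding dA_def using w_nn by (auto intro: cInf_greatest)

lemma dA_A: "a \<in> A \<Longrightarrow> dA a = 0"
  using dA_le[of a a] dA_nn[of a] w_refl[of a] by simp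

lemma dA_pos:
  assumes "x \<in> topspace X" "x \<notin> A"
  shows "0 < dA x"
proof (cases "A = {}")
  case True then show ?thesis unfolding dA_def by simp
next
  case False
  have "openin X (topspace X - A)" using Acl unfolding closedin_def by blast
  then obtain r where r: "r > 0" "{y \<in> topspace X. w x y < r} \<subseteq> topspace X - A"
    using gen_ball[OF wG] assms by blast
  have "r \<le> w x a" if "a \<in> A" for a
  proof -
    have "a \<notin> {y \<in> topspace X. w x y < r}" using r(2) that by blast
    then show ?thesis using that A_sub by auto
  qed
  then have "r \<le> dA x" unfolding dA_def using False by (auto intro: cInf_greatest)
  then show ?thesis using r by simp
qed

lemma dA_ultra:
  assumes "x \<in> topspace X" "z \<in> topspace X"
  shows "dA x \<le> max (w x z) (dA z)"
proof (cases "A = {}")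
  case True then show ?thesis unfolding dA_def by simp
next
  case False
  show ?thesis
  proof (rule ccontr)
    assume c: "\<not> ?thesis"
    then have "Inf ((\<lambda>a. w z a) ` A) < dA x" unfolding dA_def using False by auto
    then obtain a where a: "a \<in> A" "w z a < dA x" using cInf_lessD[of "(\<lambda>a. w z a) ` A"] False by auto
    have "w x a \<le> max (w x z) (w z a)" using w_ultra assms a A_sub by blast
    then show False using c a dA_le[OF a(1), of x] by auto
  qed
qed

lemma dA_near:
  assumes "x \<in> topspace X" "x \<notin> A" "A \<noteq> {}"
  shows "\<exists>a\<in>A. w x a < 2 * dA x"
proof -
  have "Inf ((\<lambda>a. w x a) ` A) < 2 * dA x" using dA_pos[OF assms(1,2)] assms(3) unfolding dA_def by auto
  then show ?thesis using cInf_lessD[of "(\<lambda>a. w x a) ` A"] assms(3) by auto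
qed

lemma dA_eq:
  assumes "x \<in> topspace X" "y \<in> topspace X" "w x y < dA x"
  shows "dA y = dA x"
  using dA_ultra[OF assms(1,2)] dA_ultra[OF assms(2,1)] assms(3) w_sym[of x y] by auto

definition Bl :: "'a \<Rightarrow> 'a set" where
  "Bl y = {z \<in> topspace X. w y z < dA y}"

lemma Bl_eq:
  assumes "y \<in> topspace X" "z \<in> topspace X" "w y z < dA y"
  shows "Bl z = Bl y"
proof -
  have e: "dA z = dA y" using dA_eq[OF assms] .
  have "w z v < dA y \<longleftrightarrow> w y v < dA y" if v: "v \<in> topspace X" for v
    using w_ultra[OF assms(2) v assms(1)] w_ultra[OF assms(1) v assms(2)] w_sym[of y z] assms(3) by auto
  then show ?thesis unfolding Bl_def e by auto
qed

definition F :: "'a set \<Rightarrow> 'a" where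
  "F B = (SOME a. a \<in> A \<and> (\<forall>z\<in>B. w z a \<le> 2 * dA z))"

definition r :: "'a \<Rightarrow> 'a" where
  "r y = (if y \<in> A then y else F (Bl y))"

lemma r_A: "y \<in> A \<Longrightarrow> r y = y" unfolding r_def by simp

lemma r_prop:
  assumes "y \<in> topspace X" "A \<noteq> {}"
  shows "r y \<in> A \<and> w y (r y) \<le> 2 * dA y"
proof (cases "y \<in> A")
  case True then show ?thesis using r_A w_refl dA_nn by simp
next
  case False
  obtain a where a: "a \<in> A" "w y a < 2 * dA y" using dA_near[OF assms(1) False assms(2)] by blast
  have "\<forall>z\<in>Bl y. w z a \<le> 2 * dA z"
  proof
    fix z assume z: "z \<in> Bl y"
    then have zT: "z \<in> topspace X" and wz: "w y z < dA y" unfolding Bl_def by auto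
    have "dA z = dA y" using dA_eq[OF assms(1) zT wz] .
    moreover have "w z a \<le> max (w z y) (w y a)" using w_ultra zT assms(1) a A_sub by blast
    ultimately show "w z a \<le> 2 * dA z" using wz a w_sym[of z y] dA_nn[of y] by auto
  qed
  then have "\<exists>a. a \<in> A \<and> (\<forall>z\<in>Bl y. w z a \<le> 2 * dA z)" using a by blast
  from someI_ex[OF this] have "F (Bl y) \<in> A \<and> (\<forall>z\<in>Bl y. w z (F (Bl y)) \<le> 2 * dA z)"
    unfolding F_def .
  moreover have "y \<in> Bl y" unfolding Bl_def using assms(1) w_refl dA_pos[OF assms(1) False] by simp
  ultimately show ?thesis using False unfolding r_def by auto
qed

lemma r_loc:
  assumes "x \<in> topspace X" "x \<notin> A" "y \<in> topspace X" "w x y < dA x"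
  shows "r y = r x"
proof -
  have e: "dA y = dA x" using dA_eq[OF assms(1,3,4)] .
  have "y \<notin> A" using e dA_A dA_pos[OF assms(1,2)] by auto
  moreover have "Bl y = Bl x" using Bl_eq[OF assms(1,3,4)] .
  ultimately show ?thesis using assms(2) unfolding r_def by simp
qed

definition h :: "'a dfun" where
  "h x y = min (w x y) (max (dA x) (dA y))"

lemma h_nn: "0 \<le> h x y" unfolding h_def using w_nn dA_nn by (simp add: le_max_iff_disj)
lemma h_le_w: "h x y \<le> w x y" unfolding h_def by simp
lemma h_sym: "h x y = h y x" unfolding h_def using w_sym by (simp add: max.commute)
lemma h_refl: "h x x = 0" unfolding h_def using w_refl dA_nn by simp

lemma h_ultra:
  assumes "x \<in> topspace X" "y \<in> topspace X" "z \<in> topspace X"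
  shows "h x y \<le> max (h x z) (h z y)"
proof -
  have 1: "w x y \<le> max (w x z) (w z y)" using w_ultra assms by blast
  have 2: "dA x \<le> max (w x z) (dA z)" using dA_ultra assms by blast
  have 3: "dA y \<le> max (w z y) (dA z)" using dA_ultra[OF assms(2,3)] w_sym[of y z] by simp
  show ?thesis unfolding h_def using 1 2 3 by (smt (verit))
qed

lemma h_pos:
  assumes "x \<in> topspace X" "y \<in> topspace X" "x \<noteq> y" "\<not> (x \<in> A \<and> y \<in> A)"
  shows "0 < h x y"
proof -
  have "0 < max (dA x) (dA y)" using assms dA_pos dA_nn by (metis less_max_iff_disj)
  then show ?thesis unfolding h_def using w_pos[OF assms(1-3)] by simp
qed

lemma h_A: "a \<in> A \<Longrightarrow> b \<in> A \<Longrightarrow> h a b = 0"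
  unfolding h_def using dA_A w_nn[of a b] by simp

lemma h_eq_w: "h x y < dA x \<Longrightarrow> h x y = w x y"
  unfolding h_def by (simp add: min_def max_def split: if_splits)

abbreviation "f \<equiv> ff S"

lemmas f_props = ff_props[OF charS]

lemma f_less: "f s < f t \<Longrightarrow> s < t"
  using f_props(5) by (meson not_less)

lemma f_max: "f (max s t) = max (f s) (f t)"
  using f_props(5)[of s t] f_props(5)[of t s] by (cases "s \<le> t") (auto simp: max_def)

definition U :: "'a dfun \<Rightarrow> 'a dfun" where
  "U d x y = (if x \<in> topspace X \<and> y \<in> topspace X then max (d (r x) (r y)) (f (h x y)) else 0)"

end



context ext_setup begin

lemma top_sub: "topspace (subtopology X A) = A" using A_sub by auto

lemma UltA: "d \<in> Ult (subtopology X A) S \<Longrightarrow> S_ultrametric S A d \<and> generates_topology (subtopology X A) d"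
  unfolding Ult_def using top_sub by auto

lemma d_ext_le:
  assumes "S_ultrametric S A d1" "S_ultrametric S A d2" "\<forall>a\<in>A. \<forall>b\<in>A. d1 a b \<le> max (d2 a b) s" "0 \<le> s"
  shows "d1 p q \<le> max (d2 p q) s"
proof (cases "p \<in> A \<and> q \<in> A")
  case True then show ?thesis using assms(3) by blast
next
  case False then show ?thesis using ult_facts(1)[OF assms(1)] ult_facts(1)[OF assms(2)] assms(4) by auto
qed

lemma d_ext_le2:
  assumes "S_ultrametric S A d1" "S_ultrametric S A d2" "\<forall>a\<in>A. \<forall>b\<in>A. d1 a b \<le> d2 a b"
  shows "d1 p q \<le> d2 p q"
proof (cases "p \<in> A \<and> q \<in> A")
  case True then show ?thesis using assms(3) by blast
next
  case False then show ?thesis using ult_facts(1)[OF assms(1)] ult_facts(1)[OF assms(2)] by auto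
qed

lemma dr_S:
  assumes "S_ultrametric S A d" "x \<in> topspace X" "y \<in> topspace X"
  shows "d (r x) (r y) \<in> S"
proof (cases "A = {}")
  case True then show ?thesis using ult_facts(1)[OF assms(1)] S0 by auto
next
  case False then show ?thesis using r_prop assms ult_facts(2)[OF assms(1)] by blast
qed

lemma d_nn: "S_ultrametric S A d \<Longrightarrow> 0 \<le> d p q" by (rule ult_nonneg[OF _ Snn])

lemma dr_ultra:
  assumes "S_ultrametric S A d" "x \<in> topspace X" "y \<in> topspace X" "z \<in> topspace X"
  shows "d (r x) (r y) \<le> max (d (r x) (r z)) (d (r z) (r y))"
proof (cases "A = {}")
  case True then show ?thesis using ult_facts(1)[OF assms(1)] by auto
next
  case False then show ?thesis using r_prop assms ult_facts(5)[OF assms(1)] by blast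
qed

lemma U_A:
  assumes "S_ultrametric S A d" "a \<in> A" "b \<in> A"
  shows "U d a b = d a b"
  using assms A_sub r_A h_A f_props(1) d_nn[OF assms(1), of a b] unfolding U_def by auto

lemma U_ult:
  assumes "S_ultrametric S A d"
  shows "S_ultrametric S (topspace X) (U d)"
  unfolding S_ultrametric_def
proof (intro conjI ballI allI impI)
  fix x y assume "x \<notin> topspace X \<or> y \<notin> topspace X"
  then show "U d x y = 0" unfolding U_def by auto
next
  fix x y assume xy: "x \<in> topspace X" "y \<in> topspace X"
  have "d (r x) (r y) \<in> S" using dr_S[OF assms xy] .
  moreover have "f (h x y) \<in> S" using f_props(3) h_nn by blast
  ultimately show "U d x y \<in> S" using xy unfolding U_def by (simp add: max_def)
next
  fix x y assume xy: "x \<in> topspace X" "y \<in> topspace X"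
  show "U d x y = 0 \<longleftrightarrow> x = y"
  proof
    assume "x = y" then show "U d x y = 0"
      using xy h_refl f_props(1) ult_facts(6)[OF assms] unfolding U_def by simp
  next
    assume U0: "U d x y = 0"
    show "x = y"
    proof (rule ccontr)
      assume ne: "x \<noteq> y"
      show False
      proof (cases "x \<in> A \<and> y \<in> A")
        case True
        then have "d x y > 0" using ult_facts(3)[OF assms] d_nn[OF assms] ne by (metis order_le_less)
        then show False using U0 xy r_A True unfolding U_def by auto
      next
        case False
        then have "f (h x y) > 0" using f_props(2) h_pos xy ne by blast
        then show False using U0 xy unfolding U_def by auto
      qed
    qed
  qed
next
  fix x y
  show "U d x y = U d y x" unfolding U_def using h_sym ult_facts(4)[OF assms] by auto
next
  fix x y z assume xyz: "x \<in> topspace X" "y \<in> topspace X" "z \<in> topspace X"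
  have 1: "d (r x) (r y) \<le> max (d (r x) (r z)) (d (r z) (r y))" using dr_ultra[OF assms xyz] .
  have "f (h x y) \<le> f (max (h x z) (h z y))" using f_props(5) h_ultra[OF xyz] by blast
  then have 2: "f (h x y) \<le> max (f (h x z)) (f (h z y))" using f_max by simp
  have e1: "U d x y = max (d (r x) (r y)) (f (h x y))" using xyz unfolding U_def by simp
  have e2: "U d x z = max (d (r x) (r z)) (f (h x z))" using xyz unfolding U_def by simp
  have e3: "U d z y = max (d (r z) (r y)) (f (h z y))" using xyz unfolding U_def by simp
  show "U d x y \<le> max (U d x z) (U d z y)" unfolding e1 e2 e3 using 1 2 by linarith
qed

lemma dA1:
  assumes "d \<in> Ult (subtopology X A) S" "a \<in> A" "e > 0"
  shows "\<exists>\<eta>>0. \<forall>b\<in>A. w a b < \<eta> \<longrightarrow> d a b < e"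
proof -
  have dU: "S_ultrametric S (topspace (subtopology X A)) d" and dG: "generates_topology (subtopology X A) d"
    using UltA[OF assms(1)] top_sub by auto
  have "openin (subtopology X A) {y \<in> topspace (subtopology X A). d a y < e}"
    by (rule ball_open[OF dU dG]) (use assms top_sub in auto)
  then have "openin (subtopology X A) {y \<in> A. d a y < e}" unfolding top_sub .
  then obtain V where V: "openin X V" "{y \<in> A. d a y < e} = V \<inter> A"
    unfolding openin_subtopology top_sub by blast
  have "a \<in> V" using V assms ult_facts(6)[OF dU] by auto
  then obtain \<eta> where \<eta>: "\<eta> > 0" "{y \<in> topspace X. w a y < \<eta>} \<subseteq> V" using gen_ball[OF wG V(1)] by blast
  have "\<forall>b\<in>A. w a b < \<eta> \<longrightarrow> d a b < e"
  proof (intro ballI impI)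
    fix b assume b: "b \<in> A" "w a b < \<eta>"
    then have "b \<in> V \<inter> A" using \<eta> A_sub by auto
    then show "d a b < e" using V(2) by blast
  qed
  then show ?thesis using \<eta> by blast
qed

lemma dA2:
  assumes "d \<in> Ult (subtopology X A) S" "a \<in> A" "e > 0"
  shows "\<exists>\<eta>>0. \<forall>b\<in>A. d a b < \<eta> \<longrightarrow> w a b < e"
proof -
  have dG: "generates_topology (subtopology X A) d" using UltA[OF assms(1)] by auto
  have aT: "a \<in> topspace X" using assms A_sub by auto
  have "openin X {y \<in> topspace X. w a y < e}" using ball_open[OF wU wG aT assms(3)] .
  then have "openin (subtopology X A) (A \<inter> {y \<in> topspace X. w a y < e})" by (rule openin_subtopology_Int2)
  moreover have "a \<in> A \<inter> {y \<in> topspace X. w a y < e}" using assms aT w_refl by auto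
  ultimately obtain \<eta> where \<eta>: "\<eta> > 0" "{y \<in> topspace (subtopology X A). d a y < \<eta>} \<subseteq> A \<inter> {y \<in> topspace X. w a y < e}"
    using gen_ball[OF dG] by blast
  then show ?thesis using top_sub by auto
qed

lemma U_cont1:
  assumes "d \<in> Ult (subtopology X A) S" "x \<in> topspace X" "e > 0"
  shows "\<exists>\<eta>>0. \<forall>y\<in>topspace X. w x y < \<eta> \<longrightarrow> U d x y < e"
proof -
  have dU: "S_ultrametric S A d" using UltA[OF assms(1)] by auto
  show ?thesis
  proof (cases "x \<in> A")
    case False
    have pos: "0 < dA x" using dA_pos assms(2) False by blast
    have "\<forall>y\<in>topspace X. w x y < min e (dA x) \<longrightarrow> U d x y < e"
    proof (intro ballI impI)
      fix y assume y: "y \<in> topspace X" "w x y < min e (dA x)"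
      have "r y = r x" using r_loc[OF assms(2) False y(1)] y(2) by simp
      then have "d (r x) (r y) = 0" using ult_facts(6)[OF dU] by simp
      moreover have "f (h x y) < e"
      proof -
        have "w x y < e" using y(2) by simp
        then show ?thesis using f_props(4)[OF h_nn, of x y] h_le_w[of x y] by linarith
      qed
      ultimately show "U d x y < e" using assms y unfolding U_def by simp
    qed
    moreover have "min e (dA x) > 0" using pos assms(3) by simp
    ultimately show ?thesis by blast
  next
    case True
    obtain \<eta>1 where \<eta>1: "\<eta>1 > 0" "\<forall>b\<in>A. w x b < \<eta>1 \<longrightarrow> d x b < e" using dA1[OF assms(1) True assms(3)] by blast
    have "\<forall>y\<in>topspace X. w x y < min e (\<eta>1/2) \<longrightarrow> U d x y < e"
    proof (intro ballI impI)
      fix y assume y: "y \<in> topspace X" "w x y < min e (\<eta>1/2)"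
      have ry: "r y \<in> A" "w y (r y) \<le> 2 * dA y" using r_prop[OF y(1)] True by auto
      have "dA y \<le> w y x" using dA_le[OF True] .
      moreover have "w x (r y) \<le> max (w x y) (w y (r y))" using w_ultra[OF assms(2) _ y(1), of "r y"] ry(1) A_sub by blast
      ultimately have "w x (r y) < \<eta>1"
      proof -
        assume b1: "dA y \<le> w y x" and b2: "w x (r y) \<le> max (w x y) (w y (r y))"
        have a1: "w x y < \<eta>1/2" using y(2) by simp
        have a2: "w y (r y) < \<eta>1" using ry(2) b1 w_sym[of x y] a1 by linarith
        have a3: "w x y < \<eta>1" using a1 w_nn[of x y] by linarith
        show ?thesis using le_less_trans[OF b2] a2 a3 by simp
      qed
      then have "d (r x) (r y) < e" using \<eta>1 ry r_A[OF True] by auto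
      moreover have "f (h x y) < e"
      proof -
        have "w x y < e" using y(2) by simp
        then show ?thesis using f_props(4)[OF h_nn, of x y] h_le_w[of x y] by linarith
      qed
      ultimately show "U d x y < e" using assms y unfolding U_def by simp
    qed
    moreover have "min e (\<eta>1/2) > 0" using \<eta>1 assms(3) by simp
    ultimately show ?thesis by blast
  qed
qed

lemma U_cont2:
  assumes "d \<in> Ult (subtopology X A) S" "x \<in> topspace X" "e > 0"
  shows "\<exists>\<eta>>0. \<forall>y\<in>topspace X. U d x y < \<eta> \<longrightarrow> w x y < e"
proof -
  have dU: "S_ultrametric S A d" using UltA[OF assms(1)] by auto
  show ?thesis
  proof (cases "x \<in> A")
    case False
    have pos: "0 < min e (dA x)" using dA_pos assms False by simp
    have "\<forall>y\<in>topspace X. U d x y < f (min e (dA x)) \<longrightarrow> w x y < e"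
    proof (intro ballI impI)
      fix y assume y: "y \<in> topspace X" "U d x y < f (min e (dA x))"
      then have "f (h x y) < f (min e (dA x))" using assms unfolding U_def by simp
      then have "h x y < min e (dA x)" by (rule f_less)
      then show "w x y < e" using h_eq_w[of x y] by simp
    qed
    then show ?thesis using f_props(2)[OF pos] by blast
  next
    case True
    obtain \<eta>1 where \<eta>1: "\<eta>1 > 0" "\<forall>b\<in>A. d x b < \<eta>1 \<longrightarrow> w x b < e" using dA2[OF assms(1) True assms(3)] by blast
    have "\<forall>y\<in>topspace X. U d x y < min \<eta>1 (f (e/2)) \<longrightarrow> w x y < e"
    proof (intro ballI impI)
      fix y assume y: "y \<in> topspace X" "U d x y < min \<eta>1 (f (e/2))"
      have ry: "r y \<in> A" "w y (r y) \<le> 2 * dA y" using r_prop[OF y(1)] True by auto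
      have "d x (r y) < \<eta>1" using y assms(2) r_A[OF True] unfolding U_def by simp
      then have 1: "w x (r y) < e" using \<eta>1 ry by blast
      have "f (h x y) < f (e/2)" using y assms(2) unfolding U_def by simp
      then have 2: "h x y < e/2" by (rule f_less)
      have hx: "h x y = min (w x y) (dA y)" unfolding h_def using dA_A[OF True] dA_nn[of y] by simp
      have 3: "w x y \<le> max (w x (r y)) (w (r y) y)" using w_ultra[OF assms(2) y(1), of "r y"] ry(1) A_sub by blast
      show "w x y < e"
      proof (cases "w x y \<le> dA y")
        case True then show ?thesis using 2 hx w_nn[of x y] by simp
      next
        case False
        then have "dA y < e/2" using 2 hx by simp
        then have a: "w (r y) y < e" using ry(2) w_sym[of y "r y"] by linarith
        show ?thesis using le_less_trans[OF 3] 1 a by simp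
      qed
    qed
    moreover have "min \<eta>1 (f (e/2)) > 0" using \<eta>1 f_props(2)[of "e/2"] assms(3) by simp
    ultimately show ?thesis by blast
  qed
qed

lemma U_gen:
  assumes "d \<in> Ult (subtopology X A) S"
  shows "generates_topology X (U d)"
  using gen_transfer[OF wG U_cont2[OF assms] U_cont1[OF assms]] .

lemma U_Ult:
  assumes "d \<in> Ult (subtopology X A) S"
  shows "U d \<in> Ult X S"
  using U_ult[OF conjunct1[OF UltA[OF assms]]] U_gen[OF assms] unfolding Ult_def by simp

end



lemma ereal_max_le: "ereal a \<le> max (ereal b) (ereal c) \<longleftrightarrow> a \<le> max b c"
  by (cases "b \<le> c") (auto simp: max_def)

context ext_setup begin

lemma U_expand: "x \<in> topspace X \<Longrightarrow> y \<in> topspace X \<Longrightarrow> U d x y = max (d (r x) (r y)) (f (h x y))"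
  unfolding U_def by simp

lemma U_UD:
  assumes d1: "d1 \<in> Ult (subtopology X A) S" and d2: "d2 \<in> Ult (subtopology X A) S"
  shows "UD S (topspace X) (U d1) (U d2) = UD S A d1 d2"
proof -
  have u1: "S_ultrametric S A d1" using UltA[OF d1] by auto
  have u2: "S_ultrametric S A d2" using UltA[OF d2] by auto
  have real_eq: "(\<forall>x\<in>topspace X. \<forall>y\<in>topspace X. U d1 x y \<le> max (U d2 x y) s \<and> U d2 x y \<le> max (U d1 x y) s)
     \<longleftrightarrow> (\<forall>a\<in>A. \<forall>b\<in>A. d1 a b \<le> max (d2 a b) s \<and> d2 a b \<le> max (d1 a b) s)" if s: "s \<in> S" for s
  proof
    assume H: "\<forall>x\<in>topspace X. \<forall>y\<in>topspace X. U d1 x y \<le> max (U d2 x y) s \<and> U d2 x y \<le> max (U d1 x y) s"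
    show "\<forall>a\<in>A. \<forall>b\<in>A. d1 a b \<le> max (d2 a b) s \<and> d2 a b \<le> max (d1 a b) s"
    proof (intro ballI)
      fix a b assume ab: "a \<in> A" "b \<in> A"
      then have "a \<in> topspace X" "b \<in> topspace X" using A_sub by auto
      then show "d1 a b \<le> max (d2 a b) s \<and> d2 a b \<le> max (d1 a b) s"
        using H U_A[OF u1 ab] U_A[OF u2 ab] by metis
    qed
  next
    assume H: "\<forall>a\<in>A. \<forall>b\<in>A. d1 a b \<le> max (d2 a b) s \<and> d2 a b \<le> max (d1 a b) s"
    have s0: "0 \<le> s" using s Snn by auto
    have 1: "d1 p q \<le> max (d2 p q) s" for p q using d_ext_le[OF u1 u2 _ s0] H by blast
    have 2: "d2 p q \<le> max (d1 p q) s" for p q using d_ext_le[OF u2 u1 _ s0] H by blast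
    show "\<forall>x\<in>topspace X. \<forall>y\<in>topspace X. U d1 x y \<le> max (U d2 x y) s \<and> U d2 x y \<le> max (U d1 x y) s"
    proof (intro ballI)
      fix x y assume xy: "x \<in> topspace X" "y \<in> topspace X"
      have a: "d1 (r x) (r y) \<le> max (d2 (r x) (r y)) s" by (rule 1)
      have b: "d2 (r x) (r y) \<le> max (d1 (r x) (r y)) s" by (rule 2)
      show "U d1 x y \<le> max (U d2 x y) s \<and> U d2 x y \<le> max (U d1 x y) s"
        unfolding U_expand[OF xy] using a b by linarith
    qed
  qed
  have "{\<epsilon> :: ereal. (\<epsilon> = \<infinity> \<or> (\<exists>s\<in>S. \<epsilon> = ereal s)) \<and>
      (\<forall>x\<in>topspace X. \<forall>y\<in>topspace X. ereal (U d1 x y) \<le> max (ereal (U d2 x y)) \<epsilon> \<and>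
                      ereal (U d2 x y) \<le> max (ereal (U d1 x y)) \<epsilon>)}
    = {\<epsilon> :: ereal. (\<epsilon> = \<infinity> \<or> (\<exists>s\<in>S. \<epsilon> = ereal s)) \<and>
      (\<forall>x\<in>A. \<forall>y\<in>A. ereal (d1 x y) \<le> max (ereal (d2 x y)) \<epsilon> \<and>
                      ereal (d2 x y) \<le> max (ereal (d1 x y)) \<epsilon>)}"
  proof (rule Collect_cong)
    fix \<epsilon> :: ereal
    show "((\<epsilon> = \<infinity> \<or> (\<exists>s\<in>S. \<epsilon> = ereal s)) \<and>
      (\<forall>x\<in>topspace X. \<forall>y\<in>topspace X. ereal (U d1 x y) \<le> max (ereal (U d2 x y)) \<epsilon> \<and>
                      ereal (U d2 x y) \<le> max (ereal (U d1 x y)) \<epsilon>))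
      = ((\<epsilon> = \<infinity> \<or> (\<exists>s\<in>S. \<epsilon> = ereal s)) \<and>
      (\<forall>x\<in>A. \<forall>y\<in>A. ereal (d1 x y) \<le> max (ereal (d2 x y)) \<epsilon> \<and>
                      ereal (d2 x y) \<le> max (ereal (d1 x y)) \<epsilon>))"
    proof (cases "\<epsilon> = \<infinity>")
      case True then show ?thesis by simp
    next
      case False
      show ?thesis
      proof (cases "\<exists>s\<in>S. \<epsilon> = ereal s")
        case True
        then obtain s where s: "s \<in> S" "\<epsilon> = ereal s" by blast
        show ?thesis using real_eq[OF s(1)] unfolding s(2) ereal_max_le by auto
      qed (use False in simp)
    qed
  qed
  then show ?thesis unfolding UD_def by simp
qed

lemma U_mono:
  assumes d1: "d1 \<in> Ult (subtopology X A) S" and d2: "d2 \<in> Ult (subtopology X A) S"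
    and le: "\<forall>a\<in>A. \<forall>b\<in>A. d1 a b \<le> d2 a b"
    and xy: "x \<in> topspace X" "y \<in> topspace X"
  shows "U d1 x y \<le> U d2 x y"
proof -
  have u1: "S_ultrametric S A d1" using UltA[OF d1] by auto
  have u2: "S_ultrametric S A d2" using UltA[OF d2] by auto
  have "d1 (r x) (r y) \<le> d2 (r x) (r y)" using d_ext_le2[OF u1 u2 le] .
  then show ?thesis unfolding U_expand[OF xy] by linarith
qed

lemma U_dmax: "U (dmax d e) = dmax (U d) (U e)"
proof (intro ext)
  fix x y
  show "U (dmax d e) x y = dmax (U d) (U e) x y"
  proof (cases "x \<in> topspace X \<and> y \<in> topspace X")
    case True
    then show ?thesis unfolding dmax_def U_expand[OF conjunct1[OF True] conjunct2[OF True]] by linarith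
  next
    case False
    then have z: "\<And>g. U g x y = 0" unfolding U_def by auto
    show ?thesis unfolding dmax_def z by simp
  qed
qed

lemma U_complete:
  assumes wc: "complete_on (topspace X) w" and d: "d \<in> Ult (subtopology X A) S"
    and dc: "complete_on A d"
  shows "complete_on (topspace X) (U d)"
  unfolding complete_on_def
proof (intro allI impI)
  fix y :: "nat \<Rightarrow> 'a"
  assume rng: "range y \<subseteq> topspace X"
    and cau: "\<forall>\<epsilon>>0. \<exists>N. \<forall>m\<ge>N. \<forall>n\<ge>N. U d (y m) (y n) < \<epsilon>"
  have yT: "y n \<in> topspace X" for n using rng by auto
  have dU: "S_ultrametric S A d" using UltA[OF d] by auto
  have Uu: "S_ultrametric S (topspace X) (U d)" using U_ult[OF dU] .
  show "\<exists>l\<in>topspace X. \<forall>\<epsilon>>0. \<exists>N. \<forall>n\<ge>N. U d (y n) l < \<epsilon>"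
  proof (cases "\<forall>\<epsilon>>0. \<exists>N. \<forall>n\<ge>N. dA (y n) < \<epsilon>")
    case True
    have Ane: "A \<noteq> {}"
    proof
      assume "A = {}"
      then have "dA z = 1" for z unfolding dA_def by simp
      then show False using True by (metis less_irrefl zero_less_one order_refl)
    qed
    have ryA: "r (y n) \<in> A" for n using r_prop[OF yT Ane] by blast
    have "range (\<lambda>n. r (y n)) \<subseteq> A" using ryA by auto
    moreover have "\<forall>\<epsilon>>0. \<exists>N. \<forall>m\<ge>N. \<forall>n\<ge>N. d (r (y m)) (r (y n)) < \<epsilon>"
    proof (intro allI impI)
      fix \<epsilon> :: real assume "\<epsilon> > 0"
      then obtain N where N: "\<forall>m\<ge>N. \<forall>n\<ge>N. U d (y m) (y n) < \<epsilon>" using cau by blast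
      have "d (r (y m)) (r (y n)) < \<epsilon>" if "m \<ge> N" "n \<ge> N" for m n
        using N that U_expand[OF yT yT, of d m n] by (metis max_less_iff_conj)
      then show "\<exists>N. \<forall>m\<ge>N. \<forall>n\<ge>N. d (r (y m)) (r (y n)) < \<epsilon>" by blast
    qed
    ultimately obtain a where a: "a \<in> A" "\<forall>\<epsilon>>0. \<exists>N. \<forall>n\<ge>N. d (r (y n)) a < \<epsilon>"
      using dc unfolding complete_on_def by blast
    have aT: "a \<in> topspace X" using a A_sub by auto
    have "\<forall>\<epsilon>>0. \<exists>N. \<forall>n\<ge>N. U d (y n) a < \<epsilon>"
    proof (intro allI impI)
      fix \<epsilon> :: real assume e: "\<epsilon> > 0"
      obtain N1 where N1: "\<forall>n\<ge>N1. d (r (y n)) a < \<epsilon>" using a e by blast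
      obtain N2 where N2: "\<forall>n\<ge>N2. dA (y n) < \<epsilon>" using True e by blast
      have "U d (y n) a < \<epsilon>" if n: "n \<ge> max N1 N2" for n
      proof -
        have 1: "d (r (y n)) (r a) < \<epsilon>" using N1 n r_A[OF a(1)] by simp
        have "h (y n) a \<le> dA (y n)" unfolding h_def using dA_A[OF a(1)] dA_nn[of "y n"] by simp
        then have "f (h (y n) a) < \<epsilon>" using f_props(4)[OF h_nn, of "y n" a] N2 n by force
        then show ?thesis unfolding U_expand[OF yT aT] using 1 by simp
      qed
      then show "\<exists>N. \<forall>n\<ge>N. U d (y n) a < \<epsilon>" by blast
    qed
    then show ?thesis using aT by blast
  next
    case False
    then obtain \<epsilon>0 where e0: "\<epsilon>0 > 0" "\<forall>N. \<exists>n\<ge>N. \<not> dA (y n) < \<epsilon>0"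
      by (meson not_le)
    have fe0: "f \<epsilon>0 > 0" using f_props(2)[OF e0(1)] .
    obtain N where N: "\<forall>m\<ge>N. \<forall>n\<ge>N. U d (y m) (y n) < f \<epsilon>0" using cau fe0 by blast
    obtain n0 where n0: "n0 \<ge> N" "\<epsilon>0 \<le> dA (y n0)" using e0(2) by (meson not_less)
    have hless: "h (y m) (y n) < t" if "m \<ge> N" "n \<ge> N" "U d (y m) (y n) < f t" for m n t
    proof -
      have "f (h (y m) (y n)) < f t" using that(3) unfolding U_expand[OF yT yT] by simp
      then show ?thesis by (rule f_less)
    qed
    have dAm: "\<epsilon>0 \<le> dA (y m)" if m: "m \<ge> N" for m
    proof -
      have "h (y n0) (y m) < \<epsilon>0" using hless[OF n0(1) m] N n0(1) m by blast
      then have hw: "h (y n0) (y m) < dA (y n0)" using n0(2) by linarith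
      then have "w (y n0) (y m) < dA (y n0)" using h_eq_w[OF hw] by simp
      then have "dA (y m) = dA (y n0)" using dA_eq[OF yT yT] by blast
      then show ?thesis using n0(2) by simp
    qed
    have "\<forall>e>0. \<exists>N. \<forall>m\<ge>N. \<forall>n\<ge>N. w (y m) (y n) < e"
    proof (intro allI impI)
      fix e :: real assume e: "e > 0"
      have "f (min e \<epsilon>0) > 0" using f_props(2) e e0(1) by simp
      then obtain N' where N': "\<forall>m\<ge>N'. \<forall>n\<ge>N'. U d (y m) (y n) < f (min e \<epsilon>0)" using cau by blast
      have "w (y m) (y n) < e" if "m \<ge> max N N'" "n \<ge> max N N'" for m n
      proof -
        have "U d (y m) (y n) < f (min e \<epsilon>0)" using N' that by simp
        then have hl: "h (y m) (y n) < min e \<epsilon>0" using hless[of m n "min e \<epsilon>0"] that by simp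
        then have hw: "h (y m) (y n) < dA (y m)" using dAm[of m] that by simp
        show ?thesis using h_eq_w[OF hw] hl by simp
      qed
      then show "\<exists>N. \<forall>m\<ge>N. \<forall>n\<ge>N. w (y m) (y n) < e" by blast
    qed
    then obtain l where l: "l \<in> topspace X" "\<forall>\<epsilon>>0. \<exists>N. \<forall>n\<ge>N. w (y n) l < \<epsilon>"
      using wc rng unfolding complete_on_def by blast
    have "\<forall>\<epsilon>>0. \<exists>N. \<forall>n\<ge>N. U d (y n) l < \<epsilon>"
    proof (intro allI impI)
      fix \<epsilon> :: real assume e: "\<epsilon> > 0"
      obtain \<eta> where \<eta>: "\<eta> > 0" "\<forall>z\<in>topspace X. w l z < \<eta> \<longrightarrow> U d l z < \<epsilon>" using U_cont1[OF d l(1) e] by blast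
      obtain N where "\<forall>n\<ge>N. w (y n) l < \<eta>" using l(2) \<eta>(1) by blast
      then have "\<forall>n\<ge>N. U d (y n) l < \<epsilon>" using \<eta>(2) yT w_sym ult_facts(4)[OF Uu] by metis
      then show "\<exists>N. \<forall>n\<ge>N. U d (y n) l < \<epsilon>" by blast
    qed
    then show ?thesis using l(1) by blast
  qed
qed

end

definition EXT1 :: "real set \<Rightarrow> 'a topology \<Rightarrow> 'a set \<Rightarrow> ('a dfun \<Rightarrow> 'a dfun) \<Rightarrow> bool" where
  "EXT1 S X A \<Upsilon> \<longleftrightarrow> (\<forall>d\<in>Ult (subtopology X A) S. \<Upsilon> d \<in> Ult X S) \<and>
            (\<forall>d1\<in>Ult (subtopology X A) S. \<forall>d2\<in>Ult (subtopology X A) S.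
               UD S (topspace X) (\<Upsilon> d1) (\<Upsilon> d2) = UD S A d1 d2) \<and>
            (\<forall>d\<in>Ult (subtopology X A) S. \<forall>a\<in>A. \<forall>b\<in>A. \<Upsilon> d a b = d a b) \<and>
            (\<forall>d1\<in>Ult (subtopology X A) S. \<forall>d2\<in>Ult (subtopology X A) S.
               (\<forall>a\<in>A. \<forall>b\<in>A. d1 a b \<le> d2 a b) \<longrightarrow>
               (\<forall>x\<in>topspace X. \<forall>y\<in>topspace X. \<Upsilon> d1 x y \<le> \<Upsilon> d2 x y)) \<and>
            (\<forall>d\<in>Ult (subtopology X A) S. \<forall>e\<in>Ult (subtopology X A) S.
               \<Upsilon> (dmax d e) = dmax (\<Upsilon> d) (\<Upsilon> e))"

definition EXTC :: "real set \<Rightarrow> 'a topology \<Rightarrow> 'a set \<Rightarrow> ('a dfun \<Rightarrow> 'a dfun) \<Rightarrow> bool" where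
  "EXTC S X A \<Upsilon> \<longleftrightarrow> (\<forall>d\<in>Ult (subtopology X A) S. complete_on A d \<longrightarrow>
               complete_on (topspace X) (\<Upsilon> d))"

lemma conj5: "(P1 \<and> P2 \<and> P3 \<and> P4 \<and> P5) \<Longrightarrow> P6 \<Longrightarrow> P1 \<and> P2 \<and> P3 \<and> P4 \<and> P5 \<and> P6"
  by blast

lemma main_ext:
  assumes "characteristic S" "S_ultrametric {0..} (topspace X) w" "generates_topology X w" "closedin X A"
  shows "\<exists>\<Upsilon>. EXT1 S X A \<Upsilon> \<and> (complete_on (topspace X) w \<longrightarrow> EXTC S X A \<Upsilon>)"
proof -
  interpret ext_setup X A w S using assms by unfold_locales
  show ?thesis unfolding EXT1_def EXTC_def
    apply (rule exI[of _ U])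
    apply (intro conjI ballI impI allI)
    subgoal by (rule U_Ult)
    subgoal by (rule U_UD)
    subgoal for d a b using U_A UltA by blast
    subgoal by (rule U_mono)
    subgoal by (rule U_dmax)
    subgoal by (rule U_complete)
    done
qed




locale cu_setup = Metric_space M \<rho> for M :: "'a set" and \<rho> +
  fixes w :: "'a dfun"
  assumes wU: "S_ultrametric {0..} M w" and wG: "generates_topology mtopology w" and mc: "mcomplete"
begin

lemma w_nn: "0 \<le> w x y" using ult_nonneg[OF wU] by simp
lemma w_refl: "w x x = 0" using ult_facts(6)[OF wU] .
lemma w_sym: "w x y = w y x" using ult_facts(4)[OF wU] .
lemma w_ultra: "x \<in> M \<Longrightarrow> y \<in> M \<Longrightarrow> z \<in> M \<Longrightarrow> w x y \<le> max (w x z) (w z y)"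
  using ult_facts(5)[OF wU] .

definition R :: "nat \<Rightarrow> 'a \<Rightarrow> 'a \<Rightarrow> bool" where
  "R n x y \<longleftrightarrow> (\<exists>t>0. t \<le> (1/2)^n \<and> w x y < t \<and>
      (\<forall>p\<in>M. \<forall>q\<in>M. w x p < t \<longrightarrow> w x q < t \<longrightarrow> \<rho> p q \<le> (1/2)^n))"

lemma R_sym:
  assumes "x \<in> M" "y \<in> M" "R n x y"
  shows "R n y x"
proof -
  obtain t where t: "t > 0" "t \<le> (1/2)^n" "w x y < t"
    "\<forall>p\<in>M. \<forall>q\<in>M. w x p < t \<longrightarrow> w x q < t \<longrightarrow> \<rho> p q \<le> (1/2)^n"
    using assms(3) unfolding R_def by blast
  have "w x p < t" if "p \<in> M" "w y p < t" for p
    using w_ultra[OF assms(1) that(1) assms(2)] t(3) that(2) by simp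
  then have "\<forall>p\<in>M. \<forall>q\<in>M. w y p < t \<longrightarrow> w y q < t \<longrightarrow> \<rho> p q \<le> (1/2)^n" using t(4) by blast
  then show ?thesis unfolding R_def using t w_sym[of x y] by auto
qed

lemma R_trans:
  assumes "x \<in> M" "y \<in> M" "z \<in> M" "R n x y" "R n y z"
  shows "R n x z"
proof -
  obtain t1 where t1: "t1 > 0" "t1 \<le> (1/2)^n" "w x y < t1"
    "\<forall>p\<in>M. \<forall>q\<in>M. w x p < t1 \<longrightarrow> w x q < t1 \<longrightarrow> \<rho> p q \<le> (1/2)^n"
    using assms(4) unfolding R_def by blast
  obtain t2 where t2: "t2 > 0" "t2 \<le> (1/2)^n" "w y z < t2"
    "\<forall>p\<in>M. \<forall>q\<in>M. w y p < t2 \<longrightarrow> w y q < t2 \<longrightarrow> \<rho> p q \<le> (1/2)^n"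
    using assms(5) unfolding R_def by blast
  have wxz: "w x z \<le> max (w x y) (w y z)" using w_ultra assms(1-3) by blast
  show ?thesis
  proof (cases "t2 \<le> t1")
    case True
    then have "w x z < t1" using wxz t1(3) t2(3) by simp
    then show ?thesis unfolding R_def using t1 by blast
  next
    case False
    then have "w x z < t2" using wxz t1(3) t2(3) by simp
    moreover have "w y p < t2" if "p \<in> M" "w x p < t2" for p
      using w_ultra[OF assms(2) that(1) assms(1)] t1(3) False that(2) w_sym[of x y] by simp
    ultimately show ?thesis unfolding R_def using t2 by blast
  qed
qed

lemma R_dec: "R (Suc n) x y \<Longrightarrow> R n x y"
proof -
  assume "R (Suc n) x y"
  then obtain t where t: "t > 0" "t \<le> (1/2)^Suc n" "w x y < t"
    "\<forall>p\<in>M. \<forall>q\<in>M. w x p < t \<longrightarrow> w x q < t \<longrightarrow> \<rho> p q \<le> (1/2)^Suc n"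
    unfolding R_def by blast
  have le: "(1/2::real)^Suc n \<le> (1/2)^n" by simp
  show "R n x y" unfolding R_def
    by (rule exI[of _ t]) (use t le in fastforce)
qed

lemma R_mono: "m \<le> n \<Longrightarrow> R n x y \<Longrightarrow> R m x y"
proof (induction n)
  case 0 then show ?case by simp
next
  case (Suc n)
  show ?case
  proof (cases "m = Suc n")
    case True then show ?thesis using Suc by simp
  next
    case False then show ?thesis using Suc R_dec by simp
  qed
qed

lemma R_rho: "x \<in> M \<Longrightarrow> y \<in> M \<Longrightarrow> R n x y \<Longrightarrow> \<rho> x y \<le> (1/2)^n"
  unfolding R_def using w_refl by fastforce

lemma R_w: "R n x y \<Longrightarrow> w x y < (1/2)^n"
  unfolding R_def by fastforce

lemma R_near:
  assumes "x \<in> M"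
  shows "\<exists>t>0. \<forall>y\<in>M. w x y < t \<longrightarrow> R n x y"
proof -
  have "x \<in> mball x ((1/2)^(n+2))" using assms by simp
  then obtain t0 where t0: "t0 > 0" "{y \<in> topspace mtopology. w x y < t0} \<subseteq> mball x ((1/2)^(n+2))"
    using gen_ball[OF wG openin_mball] by blast
  define t where "t = min t0 ((1/2)^n)"
  have tpos: "t > 0" using t0 unfolding t_def by simp
  have diam: "\<rho> p q \<le> (1/2)^n" if "p \<in> M" "q \<in> M" "w x p < t" "w x q < t" for p q
  proof -
    have "p \<in> mball x ((1/2)^(n+2))" "q \<in> mball x ((1/2)^(n+2))"
      using t0(2) that unfolding t_def by auto
    then have a: "\<rho> x p < (1/2)^(n+2)" "\<rho> x q < (1/2)^(n+2)" by auto
    have "\<rho> p q \<le> \<rho> p x + \<rho> x q" using triangle that assms by blast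
    also have "\<dots> < 2 * (1/2)^(n+2)" using a commute[of p x] by simp
    also have "\<dots> \<le> (1/2)^n" by (simp add: power_add)
    finally show ?thesis by simp
  qed
  have "\<forall>y\<in>M. w x y < t \<longrightarrow> R n x y"
    unfolding R_def using tpos diam unfolding t_def by (intro ballI impI exI[of _ t]) (auto simp: t_def)
  then show ?thesis using tpos by blast
qed

lemma R_refl: "x \<in> M \<Longrightarrow> R n x x"
  using R_near[of x n] w_refl by fastforce

lemma R_fail:
  assumes "x \<in> M" "y \<in> M" "x \<noteq> y"
  shows "\<exists>n. \<not> R n x y"
proof -
  have "\<rho> x y > 0" using assms by simp
  then obtain n where "(1/2::real)^n < \<rho> x y" using small_pow by blast
  then show ?thesis using R_rho[OF assms(1,2)] by (meson not_le)
qed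

definition u :: "'a dfun" where
  "u x y = (if x \<in> M \<and> y \<in> M then (if x = y then 0 else (1/2)^(LEAST n. \<not> R n x y)) else 0)"

lemma u_lt:
  assumes "x \<in> M" "y \<in> M"
  shows "u x y < (1/2)^n \<longleftrightarrow> R n x y"
proof (cases "x = y")
  case True then show ?thesis using assms R_refl unfolding u_def by simp
next
  case False
  define m where "m = (LEAST n. \<not> R n x y)"
  have um: "u x y = (1/2)^m" unfolding u_def m_def using assms False by simp
  have nm: "\<not> R m x y" unfolding m_def using LeastI_ex[OF R_fail[OF assms False]] .
  have "(1/2::real)^m < (1/2)^n \<longleftrightarrow> n < m" by (simp add: power_strict_decreasing_iff)
  moreover have "n < m \<longleftrightarrow> R n x y"
  proof
    assume "n < m" then show "R n x y" unfolding m_def using not_less_Least by blast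
  next
    assume "R n x y" then show "n < m" using nm R_mono by (meson not_less)
  qed
  ultimately show ?thesis using um by simp
qed

lemma u_nn: "0 \<le> u x y" unfolding u_def by simp

lemma u_ult: "S_ultrametric {0..} M u"
  unfolding S_ultrametric_def
proof (intro conjI ballI allI impI)
  fix x y assume "x \<notin> M \<or> y \<notin> M" then show "u x y = 0" unfolding u_def by auto
next
  fix x y show "u x y \<in> {0..}" using u_nn by simp
next
  fix x y assume xy: "x \<in> M" "y \<in> M"
  show "u x y = 0 \<longleftrightarrow> x = y" unfolding u_def using xy by simp
next
  fix x y assume xy: "x \<in> M" "y \<in> M"
  have "(\<lambda>n. \<not> R n x y) = (\<lambda>n. \<not> R n y x)" using R_sym xy by blast
  then show "u x y = u y x" unfolding u_def using xy by auto
next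
  fix x y z assume xyz: "x \<in> M" "y \<in> M" "z \<in> M"
  show "u x y \<le> max (u x z) (u z y)"
  proof (cases "x = y")
    case True then show ?thesis unfolding u_def using u_nn by (simp add: le_max_iff_disj)
  next
    case False
    define m where "m = (LEAST n. \<not> R n x y)"
    have um: "u x y = (1/2)^m" unfolding u_def m_def using xyz False by simp
    show ?thesis
    proof (rule ccontr)
      assume "\<not> ?thesis"
      then have "u x z < (1/2)^m" "u z y < (1/2)^m" using um by auto
      then have "R m x z" "R m z y" using u_lt xyz by blast+
      then have "R m x y" using R_trans xyz by blast
      then have "u x y < (1/2)^m" using u_lt xyz by blast
      then show False using um by simp
    qed
  qed
qed

lemma u_gen: "generates_topology mtopology u"
proof (rule gen_transfer[OF wG])
  fix x e assume x: "x \<in> topspace mtopology" and e: "(e::real) > 0"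
  obtain n where n: "(1/2::real)^n < e" using small_pow[OF e] by blast
  have "\<forall>y\<in>topspace mtopology. u x y < (1/2)^n \<longrightarrow> w x y < e"
  proof (intro ballI impI)
    fix y assume y: "y \<in> topspace mtopology" "u x y < (1/2)^n"
    then have "R n x y" using u_lt x by simp
    then have "w x y < (1/2)^n" by (rule R_w)
    then show "w x y < e" using n by simp
  qed
  then show "\<exists>\<eta>>0. \<forall>y\<in>topspace mtopology. u x y < \<eta> \<longrightarrow> w x y < e" by (meson zero_less_divide_1_iff zero_less_numeral zero_less_power)
next
  fix x e assume x: "x \<in> topspace mtopology" and e: "(e::real) > 0"
  obtain n where n: "(1/2::real)^n < e" using small_pow[OF e] by blast
  obtain t where t: "t > 0" "\<forall>y\<in>M. w x y < t \<longrightarrow> R n x y" using R_near[of x n] x by auto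
  have "\<forall>y\<in>topspace mtopology. w x y < t \<longrightarrow> u x y < e"
  proof (intro ballI impI)
    fix y assume y: "y \<in> topspace mtopology" "w x y < t"
    then have "R n x y" using t x by simp
    then have "u x y < (1/2)^n" using u_lt x y by simp
    then show "u x y < e" using n by simp
  qed
  then show "\<exists>\<eta>>0. \<forall>y\<in>topspace mtopology. w x y < \<eta> \<longrightarrow> u x y < e" using t(1) by blast
qed

lemma u_complete: "complete_on M u"
  unfolding complete_on_def
proof (intro allI impI)
  fix y :: "nat \<Rightarrow> 'a"
  assume rng: "range y \<subseteq> M" and cau: "\<forall>\<epsilon>>0. \<exists>N. \<forall>m\<ge>N. \<forall>n\<ge>N. u (y m) (y n) < \<epsilon>"
  have yM: "y n \<in> M" for n using rng by auto
  have "MCauchy y"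
    unfolding MCauchy_def
  proof (intro conjI allI impI)
    show "range y \<subseteq> M" by fact
  next
    fix \<epsilon> :: real assume e: "\<epsilon> > 0"
    obtain k where k: "(1/2::real)^k < \<epsilon>" using small_pow[OF e] by blast
    obtain N where N: "\<forall>m\<ge>N. \<forall>n\<ge>N. u (y m) (y n) < (1/2)^k" using cau by (meson zero_less_divide_1_iff zero_less_numeral zero_less_power)
    have "\<rho> (y m) (y n) < \<epsilon>" if "m \<ge> N" "n \<ge> N" for m n
    proof -
      have "R k (y m) (y n)" using N that u_lt yM by blast
      then show ?thesis using R_rho yM k by (meson le_less_trans)
    qed
    then show "\<exists>N. \<forall>n n'. N \<le> n \<longrightarrow> N \<le> n' \<longrightarrow> \<rho> (y n) (y n') < \<epsilon>" by blast
  qed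
  then obtain l where "limitin mtopology y l sequentially" using mc unfolding mcomplete_def by blast
  then have l: "l \<in> M" "\<And>U. openin mtopology U \<Longrightarrow> l \<in> U \<Longrightarrow> \<exists>N. \<forall>n\<ge>N. y n \<in> U"
    unfolding limitin_sequentially by auto
  have "\<forall>\<epsilon>>0. \<exists>N. \<forall>n\<ge>N. u (y n) l < \<epsilon>"
  proof (intro allI impI)
    fix \<epsilon> :: real assume e: "\<epsilon> > 0"
    have uu: "S_ultrametric {0..} (topspace mtopology) u" using u_ult by simp
    have "openin mtopology {z \<in> topspace mtopology. u l z < \<epsilon>}"
      by (rule ball_open[OF uu u_gen]) (use l e in auto)
    moreover have "l \<in> {z \<in> topspace mtopology. u l z < \<epsilon>}" using l e ult_facts(6)[OF u_ult] by simp
    ultimately obtain N where "\<forall>n\<ge>N. y n \<in> {z \<in> topspace mtopology. u l z < \<epsilon>}" using l(2) by blast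
    then have "\<forall>n\<ge>N. u (y n) l < \<epsilon>" using ult_facts(4)[OF u_ult] by auto
    then show "\<exists>N. \<forall>n\<ge>N. u (y n) l < \<epsilon>" by blast
  qed
  then show "\<exists>l\<in>M. \<forall>\<epsilon>>0. \<exists>N. \<forall>n\<ge>N. u (y n) l < \<epsilon>" using l(1) by blast
qed

end

lemma complete_ult:
  assumes "S_ultrametric {0..} (topspace X) w" "generates_topology X w" "completely_metrizable_space X"
  shows "\<exists>u. S_ultrametric {0..} (topspace X) u \<and> generates_topology X u \<and> complete_on (topspace X) u"
proof -
  obtain M \<rho> where M: "Metric_space M \<rho>" "Metric_space.mcomplete M \<rho>" "X = Metric_space.mtopology M \<rho>"
    using assms(3) unfolding completely_metrizable_space_def by blast
  have tX: "topspace X = M" using M Metric_space.topspace_mtopology by blast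
  have "cu_setup M \<rho> w"
    by (rule cu_setup.intro[OF M(1)]) (use M assms tX in \<open>auto simp: cu_setup_axioms_def\<close>)
  then interpret cu_setup M \<rho> w .
  show ?thesis using u_ult u_gen u_complete M(3) tX by auto
qed



theorem theorem1p11:
  fixes S :: "real set" and X :: "'a topology" and A :: "'a set"
  assumes "characteristic S" and "ultrametrizable X" and "closedin X A"
  shows "(\<exists>\<Upsilon>. (\<forall>d\<in>Ult (subtopology X A) S. \<Upsilon> d \<in> Ult X S) \<and>
            (\<forall>d1\<in>Ult (subtopology X A) S. \<forall>d2\<in>Ult (subtopology X A) S.
               UD S (topspace X) (\<Upsilon> d1) (\<Upsilon> d2) = UD S A d1 d2) \<and>
            (\<forall>d\<in>Ult (subtopology X A) S. \<forall>a\<in>A. \<forall>b\<in>A. \<Upsilon> d a b = d a b) \<and>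
            (\<forall>d1\<in>Ult (subtopology X A) S. \<forall>d2\<in>Ult (subtopology X A) S.
               (\<forall>a\<in>A. \<forall>b\<in>A. d1 a b \<le> d2 a b) \<longrightarrow>
               (\<forall>x\<in>topspace X. \<forall>y\<in>topspace X. \<Upsilon> d1 x y \<le> \<Upsilon> d2 x y)) \<and>
            (\<forall>d\<in>Ult (subtopology X A) S. \<forall>e\<in>Ult (subtopology X A) S.
               \<Upsilon> (dmax d e) = dmax (\<Upsilon> d) (\<Upsilon> e)))
       \<and> (completely_metrizable_space X \<longrightarrow>
          (\<exists>\<Upsilon>. (\<forall>d\<in>Ult (subtopology X A) S. \<Upsilon> d \<in> Ult X S) \<and>
            (\<forall>d1\<in>Ult (subtopology X A) S. \<forall>d2\<in>Ult (subtopology X A) S.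
               UD S (topspace X) (\<Upsilon> d1) (\<Upsilon> d2) = UD S A d1 d2) \<and>
            (\<forall>d\<in>Ult (subtopology X A) S. \<forall>a\<in>A. \<forall>b\<in>A. \<Upsilon> d a b = d a b) \<and>
            (\<forall>d1\<in>Ult (subtopology X A) S. \<forall>d2\<in>Ult (subtopology X A) S.
               (\<forall>a\<in>A. \<forall>b\<in>A. d1 a b \<le> d2 a b) \<longrightarrow>
               (\<forall>x\<in>topspace X. \<forall>y\<in>topspace X. \<Upsilon> d1 x y \<le> \<Upsilon> d2 x y)) \<and>
            (\<forall>d\<in>Ult (subtopology X A) S. \<forall>e\<in>Ult (subtopology X A) S.
               \<Upsilon> (dmax d e) = dmax (\<Upsilon> d) (\<Upsilon> e)) \<and>
            (\<forall>d\<in>Ult (subtopology X A) S. complete_on A d \<longrightarrow>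
               complete_on (topspace X) (\<Upsilon> d))))"
proof (intro conjI impI)
  obtain w where w: "w \<in> Ult X {0..}" using assms(2) unfolding ultrametrizable_def by blast
  then have wU: "S_ultrametric {0..} (topspace X) w" and wG: "generates_topology X w"
    unfolding Ult_def by auto
  from main_ext[OF assms(1) wU wG assms(3)] obtain \<Upsilon>
    where H: "EXT1 S X A \<Upsilon> \<and> (complete_on (topspace X) w \<longrightarrow> EXTC S X A \<Upsilon>)" ..
  from conjunct1[OF H] show "\<exists>\<Upsilon>. (\<forall>d\<in>Ult (subtopology X A) S. \<Upsilon> d \<in> Ult X S) \<and>
            (\<forall>d1\<in>Ult (subtopology X A) S. \<forall>d2\<in>Ult (subtopology X A) S.
               UD S (topspace X) (\<Upsilon> d1) (\<Upsilon> d2) = UD S A d1 d2) \<and>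
            (\<forall>d\<in>Ult (subtopology X A) S. \<forall>a\<in>A. \<forall>b\<in>A. \<Upsilon> d a b = d a b) \<and>
            (\<forall>d1\<in>Ult (subtopology X A) S. \<forall>d2\<in>Ult (subtopology X A) S.
               (\<forall>a\<in>A. \<forall>b\<in>A. d1 a b \<le> d2 a b) \<longrightarrow>
               (\<forall>x\<in>topspace X. \<forall>y\<in>topspace X. \<Upsilon> d1 x y \<le> \<Upsilon> d2 x y)) \<and>
            (\<forall>d\<in>Ult (subtopology X A) S. \<forall>e\<in>Ult (subtopology X A) S.
               \<Upsilon> (dmax d e) = dmax (\<Upsilon> d) (\<Upsilon> e))"
    unfolding EXT1_def by (rule exI[of _ \<Upsilon>])
next
  assume cm: "completely_metrizable_space X"
  obtain w where w: "w \<in> Ult X {0..}" using assms(2) unfolding ultrametrizable_def by blast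
  then have wU: "S_ultrametric {0..} (topspace X) w" and wG: "generates_topology X w"
    unfolding Ult_def by auto
  obtain u where u: "S_ultrametric {0..} (topspace X) u" "generates_topology X u" "complete_on (topspace X) u"
    using complete_ult[OF wU wG cm] by blast
  from main_ext[OF assms(1) u(1) u(2) assms(3)] obtain \<Upsilon>
    where H: "EXT1 S X A \<Upsilon> \<and> (complete_on (topspace X) u \<longrightarrow> EXTC S X A \<Upsilon>)" ..
  have 1: "EXT1 S X A \<Upsilon>" using H by (rule conjunct1)
  have 2: "EXTC S X A \<Upsilon>" using H u(3) by (simp only: simp_thms)
  show "\<exists>\<Upsilon>. (\<forall>d\<in>Ult (subtopology X A) S. \<Upsilon> d \<in> Ult X S) \<and>
            (\<forall>d1\<in>Ult (subtopology X A) S. \<forall>d2\<in>Ult (subtopology X A) S.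
               UD S (topspace X) (\<Upsilon> d1) (\<Upsilon> d2) = UD S A d1 d2) \<and>
            (\<forall>d\<in>Ult (subtopology X A) S. \<forall>a\<in>A. \<forall>b\<in>A. \<Upsilon> d a b = d a b) \<and>
            (\<forall>d1\<in>Ult (subtopology X A) S. \<forall>d2\<in>Ult (subtopology X A) S.
               (\<forall>a\<in>A. \<forall>b\<in>A. d1 a b \<le> d2 a b) \<longrightarrow>
               (\<forall>x\<in>topspace X. \<forall>y\<in>topspace X. \<Upsilon> d1 x y \<le> \<Upsilon> d2 x y)) \<and>
            (\<forall>d\<in>Ult (subtopology X A) S. \<forall>e\<in>Ult (subtopology X A) S.
               \<Upsilon> (dmax d e) = dmax (\<Upsilon> d) (\<Upsilon> e)) \<and>
            (\<forall>d\<in>Ult (subtopology X A) S. complete_on A d \<longrightarrow>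
               complete_on (topspace X) (\<Upsilon> d))"
    by (rule exI[of _ \<Upsilon>], rule conj5[OF 1[unfolded EXT1_def] 2[unfolded EXTC_def]])
qed

end
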